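(* Let $\mathcal H_m$ denote the set of $2$-regular graphs on $m$ vertices containing no subgraph isomorphic to $K_{2,2}$ (i.e., disjoint unions of cycles, none of length $4$), and let $$\mathcal G_n = \{K_1 * (K_1 + H) : H \in \mathcal H_{n-2}\} \cup \{K_1 * (K_2 + H) : H \in \mathcal H_{n-3}\} \cup \{K_1 * (P_4 + H) : H \in \mathcal H_{n-5}\}.$$ Then every graph in $\mathcal G_n$ is $K_{2,3}$-saturated and has exactly $2n-3$ edges.
   Context: All graphs are finite and simple. $K_m$ is the complete graph and $P_m$ the path on $m$ vertices. For graphs $G,H$ on disjoint vertex sets, $G+H$ is their disjoint union, and the join $G*H$ is obtained from $G+H$ by adding all edges $xy$ with $x \in V(G)$, $y \in V(H)$. A graph $G$ is $K_{2,3}$-saturated if $G$ contains no subgraph isomorphic to $K_{2,3}$, but for every pair of nonadjacent vertices $u,v$, the graph $G+uv$ contains a subgraph isomorphic to $K_{2,3}$. *)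

theory Defs
  imports Main
begin

type_synonym 'a graph = "'a set \<times> 'a set set"

definition verts :: "'a graph \<Rightarrow> 'a set" where "verts G = fst G"
definition edges :: "'a graph \<Rightarrow> 'a set set" where "edges G = snd G"

definition wf_graph :: "'a graph \<Rightarrow> bool" where
  "wf_graph G \<longleftrightarrow> finite (verts G) \<and>
     (\<forall>e\<in>edges G. \<exists>u v. e = {u, v} \<and> u \<in> verts G \<and> v \<in> verts G \<and> u \<noteq> v)"

definition contains_subgraph :: "'b graph \<Rightarrow> 'a graph \<Rightarrow> bool" where
  "contains_subgraph H G \<longleftrightarrow> (\<exists>f. inj_on f (verts H) \<and> f ` verts H \<subseteq> verts G \<and>
      (\<forall>e\<in>edges H. f ` e \<in> edges G))"

definition complete_bipartite :: "nat \<Rightarrow> nat \<Rightarrow> nat graph" where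
  "complete_bipartite s t = ({0..<s+t}, {{i, j} | i j. i < s \<and> s \<le> j \<and> j < s + t})"

definition add_edge :: "'a graph \<Rightarrow> 'a \<Rightarrow> 'a \<Rightarrow> 'a graph" where
  "add_edge G u v = (verts G, insert {u, v} (edges G))"

definition K23_saturated :: "'a graph \<Rightarrow> bool" where
  "K23_saturated G \<longleftrightarrow> wf_graph G \<and> \<not> contains_subgraph (complete_bipartite 2 3) G \<and>
     (\<forall>u\<in>verts G. \<forall>v\<in>verts G. u \<noteq> v \<and> {u, v} \<notin> edges G \<longrightarrow>
        contains_subgraph (complete_bipartite 2 3) (add_edge G u v))"

definition degree :: "'a graph \<Rightarrow> 'a \<Rightarrow> nat" where
  "degree G v = card {u. {u, v} \<in> edges G}"

definition two_regular :: "'a graph \<Rightarrow> bool" where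
  "two_regular G \<longleftrightarrow> (\<forall>v\<in>verts G. degree G v = 2)"

text \<open>Complete graph on a vertex set, path through a list of distinct vertices,
  disjoint union and join (used only for disjoint vertex sets).\<close>
definition complete_graph :: "'a set \<Rightarrow> 'a graph" where
  "complete_graph S = (S, {{u, v} | u v. u \<in> S \<and> v \<in> S \<and> u \<noteq> v})"

definition path_graph :: "'a list \<Rightarrow> 'a graph" where
  "path_graph xs = (set xs, {{xs ! i, xs ! Suc i} | i. Suc i < length xs})"

definition gunion :: "'a graph \<Rightarrow> 'a graph \<Rightarrow> 'a graph" where
  "gunion G H = (verts G \<union> verts H, edges G \<union> edges H)"

definition gjoin :: "'a graph \<Rightarrow> 'a graph \<Rightarrow> 'a graph" where
  "gjoin G H = (verts G \<union> verts H,
     edges G \<union> edges H \<union> {{u, v} | u v. u \<in> verts G \<and> v \<in> verts H})"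

definition in_H :: "nat \<Rightarrow> 'a graph \<Rightarrow> bool" where
  "in_H m H \<longleftrightarrow> wf_graph H \<and> card (verts H) = m \<and> two_regular H \<and>
     \<not> contains_subgraph (complete_bipartite 2 2) H"

text \<open>Written with m + k = n to
  avoid natural-number subtraction.\<close>
definition in_G :: "nat \<Rightarrow> 'a graph \<Rightarrow> bool" where
  "in_G n G \<longleftrightarrow>
    (\<exists>H m x y. in_H m H \<and> m + 2 = n \<and> x \<notin> verts H \<and> y \<notin> verts H \<and> x \<noteq> y \<and>
        G = gjoin (complete_graph {x}) (gunion (complete_graph {y}) H)) \<or>
    (\<exists>H m x y z. in_H m H \<and> m + 3 = n \<and> distinct [x, y, z] \<and>
        set [x, y, z] \<inter> verts H = {} \<and>
        G = gjoin (complete_graph {x}) (gunion (complete_graph {y, z}) H)) \<or>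
    (\<exists>H m x ps. in_H m H \<and> m + 5 = n \<and> length ps = 4 \<and> distinct (x # ps) \<and>
        set (x # ps) \<inter> verts H = {} \<and>
        G = gjoin (complete_graph {x}) (gunion (path_graph ps) H))"

end

theory Submission
  imports Defs
begin

lemma K23_iff:
  "contains_subgraph (complete_bipartite 2 3) G \<longleftrightarrow>
   (\<exists>a b c d e. distinct [a,b,c,d,e] \<and> {a,b,c,d,e} \<subseteq> verts G \<and>
     {a,c} \<in> edges G \<and> {a,d} \<in> edges G \<and> {a,e} \<in> edges G \<and>
     {b,c} \<in> edges G \<and> {b,d} \<in> edges G \<and> {b,e} \<in> edges G)"
proof
  assume "contains_subgraph (complete_bipartite 2 3) G"
  then obtain f where inj: "inj_on f {0..<5}" and im: "f ` {0..<5} \<subseteq> verts G"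
    and ed: "\<forall>e\<in>{{i, j} | i j. i < (2::nat) \<and> 2 \<le> j \<and> j < 5}. f ` e \<in> edges G"
    by (auto simp: contains_subgraph_def complete_bipartite_def verts_def edges_def)
  have e: "{f i, f j} \<in> edges G" if "i < 2" "2 \<le> j" "j < 5" for i j
  proof -
    have "{i,j} \<in> {{i, j} | i j. i < (2::nat) \<and> 2 \<le> j \<and> j < 5}" using that by blast
    from ed[rule_format, OF this] show ?thesis by simp
  qed
  have ne: "f i \<noteq> f j" if "i \<noteq> j" "i < 5" "j < 5" for i j
    using inj that by (auto simp: inj_on_def)
  have "distinct [f 0, f 1, f 2, f 3, f 4]"
    using ne[of 0 1] ne[of 0 2] ne[of 0 3] ne[of 0 4] ne[of 1 2] ne[of 1 3] ne[of 1 4]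
      ne[of 2 3] ne[of 2 4] ne[of 3 4] by auto
  moreover have "{f 0, f 1, f 2, f 3, f 4} \<subseteq> verts G" using im by auto
  ultimately show "\<exists>a b c d e. distinct [a,b,c,d,e] \<and> {a,b,c,d,e} \<subseteq> verts G \<and>
     {a,c} \<in> edges G \<and> {a,d} \<in> edges G \<and> {a,e} \<in> edges G \<and>
     {b,c} \<in> edges G \<and> {b,d} \<in> edges G \<and> {b,e} \<in> edges G"
    apply - apply (rule exI[of _ "f 0"], rule exI[of _ "f 1"], rule exI[of _ "f 2"], rule exI[of _ "f 3"], rule exI[of _ "f 4"])
    using e[of 0 2] e[of 0 3] e[of 0 4] e[of 1 2] e[of 1 3] e[of 1 4] by simp
next
  assume "\<exists>a b c d e. distinct [a,b,c,d,e] \<and> {a,b,c,d,e} \<subseteq> verts G \<and>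
     {a,c} \<in> edges G \<and> {a,d} \<in> edges G \<and> {a,e} \<in> edges G \<and>
     {b,c} \<in> edges G \<and> {b,d} \<in> edges G \<and> {b,e} \<in> edges G"
  then obtain a b c d e where h: "distinct [a,b,c,d,e]" "{a,b,c,d,e} \<subseteq> verts G"
     "{a,c} \<in> edges G" "{a,d} \<in> edges G" "{a,e} \<in> edges G"
     "{b,c} \<in> edges G" "{b,d} \<in> edges G" "{b,e} \<in> edges G" by blast
  define f where "f = (\<lambda>i. [a,b,c,d,e] ! i)"
  have U: "{0..<5::nat} = {0,1,2,3,4}" by auto
  have "inj_on f {0..<5}" unfolding f_def
    using h(1) by (simp add: U inj_on_def) metis
  moreover have "f ` {0..<5} \<subseteq> verts G" using h(2) by (auto simp: U f_def)
  moreover have "\<forall>ee\<in>{{i, j} | i j. i < (2::nat) \<and> 2 \<le> j \<and> j < 5}. f ` ee \<in> edges G"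
  proof clarify
    fix i j :: nat assume "i < 2" "2 \<le> j" "j < 5"
    then have "i = 0 \<or> i = 1" "j = 2 \<or> j = 3 \<or> j = 4" by auto
    then show "f ` {i,j} \<in> edges G" using h by (auto simp: f_def)
  qed
  ultimately show "contains_subgraph (complete_bipartite 2 3) G"
    unfolding contains_subgraph_def complete_bipartite_def verts_def edges_def
    apply - apply (rule exI[of _ f]) by simp
qed

lemma K22_iff:
  "contains_subgraph (complete_bipartite 2 2) G \<longleftrightarrow>
   (\<exists>a b c d. distinct [a,b,c,d] \<and> {a,b,c,d} \<subseteq> verts G \<and>
     {a,c} \<in> edges G \<and> {a,d} \<in> edges G \<and> {b,c} \<in> edges G \<and> {b,d} \<in> edges G)"
proof
  assume "contains_subgraph (complete_bipartite 2 2) G"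
  then obtain f where inj: "inj_on f {0..<4}" and im: "f ` {0..<4} \<subseteq> verts G"
    and ed: "\<forall>e\<in>{{i, j} | i j. i < (2::nat) \<and> 2 \<le> j \<and> j < 4}. f ` e \<in> edges G"
    by (auto simp: contains_subgraph_def complete_bipartite_def verts_def edges_def)
  have e: "{f i, f j} \<in> edges G" if "i < 2" "2 \<le> j" "j < 4" for i j
  proof -
    have "{i,j} \<in> {{i, j} | i j. i < (2::nat) \<and> 2 \<le> j \<and> j < 4}" using that by blast
    from ed[rule_format, OF this] show ?thesis by simp
  qed
  have ne: "f i \<noteq> f j" if "i \<noteq> j" "i < 4" "j < 4" for i j
    using inj that by (auto simp: inj_on_def)
  have "distinct [f 0, f 1, f 2, f 3]"
    using ne[of 0 1] ne[of 0 2] ne[of 0 3] ne[of 1 2] ne[of 1 3] ne[of 2 3] by auto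
  moreover have "{f 0, f 1, f 2, f 3} \<subseteq> verts G" using im by auto
  ultimately show "\<exists>a b c d. distinct [a,b,c,d] \<and> {a,b,c,d} \<subseteq> verts G \<and>
     {a,c} \<in> edges G \<and> {a,d} \<in> edges G \<and> {b,c} \<in> edges G \<and> {b,d} \<in> edges G"
    apply - apply (rule exI[of _ "f 0"], rule exI[of _ "f 1"], rule exI[of _ "f 2"], rule exI[of _ "f 3"])
    using e[of 0 2] e[of 0 3] e[of 1 2] e[of 1 3] by simp
next
  assume "\<exists>a b c d. distinct [a,b,c,d] \<and> {a,b,c,d} \<subseteq> verts G \<and>
     {a,c} \<in> edges G \<and> {a,d} \<in> edges G \<and> {b,c} \<in> edges G \<and> {b,d} \<in> edges G"
  then obtain a b c d where h: "distinct [a,b,c,d]" "{a,b,c,d} \<subseteq> verts G"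
     "{a,c} \<in> edges G" "{a,d} \<in> edges G" "{b,c} \<in> edges G" "{b,d} \<in> edges G" by blast
  define f where "f = (\<lambda>i. [a,b,c,d] ! i)"
  have U: "{0..<4::nat} = {0,1,2,3}" by auto
  have "inj_on f {0..<4}" unfolding f_def
    using h(1) by (simp add: U inj_on_def) metis
  moreover have "f ` {0..<4} \<subseteq> verts G" using h(2) by (auto simp: U f_def)
  moreover have "\<forall>ee\<in>{{i, j} | i j. i < (2::nat) \<and> 2 \<le> j \<and> j < 4}. f ` ee \<in> edges G"
  proof clarify
    fix i j :: nat assume "i < 2" "2 \<le> j" "j < 4"
    then have "i = 0 \<or> i = 1" "j = 2 \<or> j = 3" by auto
    then show "f ` {i,j} \<in> edges G" using h by (auto simp: f_def)
  qed
  ultimately show "contains_subgraph (complete_bipartite 2 2) G"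
    unfolding contains_subgraph_def complete_bipartite_def verts_def edges_def
    apply - apply (rule exI[of _ f]) by simp
qed

lemma wf_edge:
  assumes "wf_graph F" "{a,b} \<in> edges F"
  shows "a \<in> verts F \<and> b \<in> verts F \<and> a \<noteq> b"
proof -
  obtain u v where "{a,b} = {u,v}" "u \<in> verts F" "v \<in> verts F" "u \<noteq> v"
    using assms unfolding wf_graph_def by blast
  then show ?thesis by (auto simp: doubleton_eq_iff)
qed

definition md :: "'a graph \<Rightarrow> bool" where
  "md F \<longleftrightarrow> (\<forall>v a b c. {v,a} \<in> edges F \<and> {v,b} \<in> edges F \<and> {v,c} \<in> edges F \<longrightarrow>
     a = b \<or> a = c \<or> b = c)"

definition good :: "'a graph \<Rightarrow> 'a \<Rightarrow> 'a \<Rightarrow> bool" where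
  "good F u v \<longleftrightarrow> (\<exists>n1 n2. n1 \<noteq> n2 \<and> {u,n1} \<in> edges F \<and> {u,n2} \<in> edges F) \<or>
     (\<exists>n1 n2. n1 \<noteq> n2 \<and> {v,n1} \<in> edges F \<and> {v,n2} \<in> edges F) \<or>
     (\<exists>c d. {u,c} \<in> edges F \<and> {c,d} \<in> edges F \<and> {d,v} \<in> edges F \<and> distinct [u,v,c,d])"

lemma apex_verts: "verts (gjoin (complete_graph {x}) F) = insert x (verts F)"
  unfolding gjoin_def verts_def complete_graph_def by simp

lemma apex_edges: "edges (gjoin (complete_graph {x}) F) = edges F \<union> (\<lambda>r. {x,r}) ` verts F"
  by (auto simp add: gjoin_def verts_def edges_def complete_graph_def)

lemma apex_edge_F:
  assumes "x \<notin> verts F" "{a,b} \<in> edges (gjoin (complete_graph {x}) F)" "a \<noteq> x" "b \<noteq> x"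
  shows "{a,b} \<in> edges F"
  using assms by (auto simp: apex_edges doubleton_eq_iff)

lemma add_edge_verts: "verts (add_edge G u v) = verts G"
  by (simp add: add_edge_def verts_def)

lemma add_edge_edges: "edges (add_edge G u v) = insert {u,v} (edges G)"
  by (simp add: add_edge_def edges_def verts_def)

lemma apex_main:
  assumes wf: "wf_graph F" and x: "x \<notin> verts F" and m: "md F"
    and nc: "\<not> contains_subgraph (complete_bipartite 2 2) F"
    and sat: "\<forall>u\<in>verts F. \<forall>v\<in>verts F. u \<noteq> v \<and> {u,v} \<notin> edges F \<longrightarrow> good F u v"
  shows "K23_saturated (gjoin (complete_graph {x}) F)"
proof -
  let ?G = "gjoin (complete_graph {x}) F"
  have wfG: "wf_graph ?G"
    unfolding wf_graph_def
  proof
    show "finite (verts ?G)" using wf by (simp add: apex_verts wf_graph_def)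
    show "\<forall>e\<in>edges ?G. \<exists>u v. e = {u, v} \<and> u \<in> verts ?G \<and> v \<in> verts ?G \<and> u \<noteq> v"
    proof
      fix e assume "e \<in> edges ?G"
      then have "e \<in> edges F \<or> (\<exists>r\<in>verts F. e = {x,r})" by (auto simp: apex_edges)
      then show "\<exists>u v. e = {u, v} \<and> u \<in> verts ?G \<and> v \<in> verts ?G \<and> u \<noteq> v"
      proof
        assume "e \<in> edges F"
        then obtain u v where "e = {u,v}" "u \<in> verts F" "v \<in> verts F" "u \<noteq> v"
          using wf unfolding wf_graph_def by blast
        then show ?thesis unfolding apex_verts by blast
      next
        assume "\<exists>r\<in>verts F. e = {x,r}"
        then obtain r where "r \<in> verts F" "e = {x,r}" by blast
        moreover then have "x \<noteq> r" using x by blast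
        ultimately show ?thesis unfolding apex_verts by blast
      qed
    qed
  qed
  have noK: "\<not> contains_subgraph (complete_bipartite 2 3) ?G"
  proof
    assume "contains_subgraph (complete_bipartite 2 3) ?G"
    then obtain a b c d e where h: "distinct [a,b,c,d,e]" "{a,b,c,d,e} \<subseteq> verts ?G"
     "{a,c} \<in> edges ?G" "{a,d} \<in> edges ?G" "{a,e} \<in> edges ?G"
     "{b,c} \<in> edges ?G" "{b,d} \<in> edges ?G" "{b,e} \<in> edges ?G" unfolding K23_iff by blast
    have E: "{p,q} \<in> edges F" if "{p,q} \<in> edges ?G" "p \<noteq> x" "q \<noteq> x" for p q
      using apex_edge_F[OF x that] .
    have C4: False if "distinct [p,q,r,s]" "{p,r} \<in> edges F" "{p,s} \<in> edges F"
      "{q,r} \<in> edges F" "{q,s} \<in> edges F" for p q r s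
    proof -
      have "p \<in> verts F" "q \<in> verts F" "r \<in> verts F" "s \<in> verts F"
        using wf_edge[OF wf that(2)] wf_edge[OF wf that(5)] by auto
      then have "contains_subgraph (complete_bipartite 2 2) F" unfolding K22_iff
        apply - apply (rule exI[of _ p], rule exI[of _ q], rule exI[of _ r], rule exI[of _ s])
        using that by simp
      with nc show False by simp
    qed
    have M: False if "distinct [p,q,r]" "{v,p} \<in> edges F" "{v,q} \<in> edges F" "{v,r} \<in> edges F" for v p q r
      using m[unfolded md_def, rule_format, of v p q r] that by simp
    have d5: "a \<noteq> b" "a \<noteq> c" "a \<noteq> d" "a \<noteq> e" "b \<noteq> c" "b \<noteq> d" "b \<noteq> e"
      "c \<noteq> d" "c \<noteq> e" "d \<noteq> e" using h(1) by auto
    show False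
    proof (cases "a = x")
      case True
      then have "b \<noteq> x" "c \<noteq> x" "d \<noteq> x" "e \<noteq> x" using d5 by auto
      then show False using M[of c d e b] E[OF h(6)] E[OF h(7)] E[OF h(8)] d5 by simp
    next
      case a: False
      show False
      proof (cases "b = x")
        case True
        then have "c \<noteq> x" "d \<noteq> x" "e \<noteq> x" using d5 by auto
        then show False using M[of c d e a] E[OF h(3)] E[OF h(4)] E[OF h(5)] a d5 by simp
      next
        case b: False
        consider "c = x" | "d = x" | "e = x" | "c \<noteq> x" "d \<noteq> x" "e \<noteq> x" by blast
        then show False
        proof cases
          case 1 then have "d \<noteq> x" "e \<noteq> x" using d5 by auto
          then show False using C4[of a b d e] E[OF h(4)] E[OF h(5)] E[OF h(7)] E[OF h(8)] a b d5 by simp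
        next
          case 2 then have "c \<noteq> x" "e \<noteq> x" using d5 by auto
          then show False using C4[of a b c e] E[OF h(3)] E[OF h(5)] E[OF h(6)] E[OF h(8)] a b d5 by simp
        next
          case 3 then have "c \<noteq> x" "d \<noteq> x" using d5 by auto
          then show False using C4[of a b c d] E[OF h(3)] E[OF h(4)] E[OF h(6)] E[OF h(7)] a b d5 by simp
        next
          case 4
          then show False using C4[of a b c d] E[OF h(3)] E[OF h(4)] E[OF h(6)] E[OF h(7)] a b d5 by simp
        qed
      qed
    qed
  qed
  have satG: "contains_subgraph (complete_bipartite 2 3) (add_edge ?G u v)"
    if u: "u \<in> verts ?G" and v: "v \<in> verts ?G" and uv: "u \<noteq> v" and ne: "{u,v} \<notin> edges ?G" for u v
  proof -
    have ux: "u \<noteq> x" using ne v uv by (auto simp: apex_verts apex_edges)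
    have vx: "v \<noteq> x" using ne u uv by (auto simp: apex_verts apex_edges insert_commute)
    have uF: "u \<in> verts F" and vF: "v \<in> verts F" using u v ux vx by (auto simp: apex_verts)
    have neF: "{u,v} \<notin> edges F" using ne by (auto simp: apex_edges)
    have vA: "verts (add_edge ?G u v) = insert x (verts F)"
      unfolding add_edge_verts apex_verts ..
    have eA: "edges (add_edge ?G u v) = insert {u,v} (edges F \<union> (\<lambda>r. {x,r}) ` verts F)"
      unfolding add_edge_edges apex_edges ..
    have gd: "good F u v" using sat uF vF uv neF by blast
    have case1: "contains_subgraph (complete_bipartite 2 3) (add_edge ?G p q)"
      if "p \<in> verts F" "q \<in> verts F" "p \<noteq> q" "{p,q} \<notin> edges F" "n1 \<noteq> n2"
         "{p,n1} \<in> edges F" "{p,n2} \<in> edges F"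
         and eAA: "edges (add_edge ?G p q) = insert {p,q} (edges F \<union> (\<lambda>r. {x,r}) ` verts F)"
         and vAA: "verts (add_edge ?G p q) = insert x (verts F)" for p q n1 n2
    proof -
      have n: "n1 \<in> verts F" "n2 \<in> verts F" "n1 \<noteq> p" "n2 \<noteq> p"
        using wf_edge[OF wf that(6)] wf_edge[OF wf that(7)] by auto
      have "n1 \<noteq> q" "n2 \<noteq> q" using that by auto
      then show ?thesis unfolding K23_iff eAA vAA
        apply - apply (rule exI[of _ x], rule exI[of _ p], rule exI[of _ q], rule exI[of _ n1], rule exI[of _ n2])
        using that n x by auto
    qed
    from gd[unfolded good_def] show ?thesis
    proof (elim disjE exE conjE)
      fix n1 n2 assume "n1 \<noteq> n2" "{u,n1} \<in> edges F" "{u,n2} \<in> edges F"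
      then show ?thesis using case1[of u v n1 n2] uF vF uv neF eA vA by blast
    next
      fix n1 n2 assume "n1 \<noteq> n2" "{v,n1} \<in> edges F" "{v,n2} \<in> edges F"
      moreover have "add_edge ?G v u = add_edge ?G u v" by (simp add: add_edge_def insert_commute)
      ultimately show ?thesis using case1[of v u n1 n2] uF vF uv neF eA vA
        by (metis insert_commute)
    next
      fix c d assume cd: "{u,c} \<in> edges F" "{c,d} \<in> edges F" "{d,v} \<in> edges F" "distinct [u,v,c,d]"
      have "c \<in> verts F" "d \<in> verts F" using wf_edge[OF wf cd(2)] by auto
      then show ?thesis unfolding K23_iff eA vA
        apply - apply (rule exI[of _ u], rule exI[of _ d], rule exI[of _ x], rule exI[of _ c], rule exI[of _ v])
        using cd uF vF x by (auto simp: insert_commute)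
    qed
  qed
  show ?thesis unfolding K23_saturated_def using wfG noK satG by blast
qed

lemma apex_card:
  assumes wf: "wf_graph F" and x: "x \<notin> verts F"
  shows "card (edges (gjoin (complete_graph {x}) F)) = card (edges F) + card (verts F)"
proof -
  have fV: "finite (verts F)" using wf by (simp add: wf_graph_def)
  have "edges F \<subseteq> Pow (verts F)" using wf_edge[OF wf] wf unfolding wf_graph_def by fastforce
  then have fE: "finite (edges F)" by (rule finite_subset) (simp add: fV)
  have inj: "inj_on (\<lambda>r. {x,r}) (verts F)" by (auto simp: inj_on_def doubleton_eq_iff)
  have nx: "{x,r} \<notin> edges F" for r using wf_edge[OF wf, of x r] x by blast
  have dj: "edges F \<inter> (\<lambda>r. {x,r}) ` verts F = {}"
    using nx by blast
  have c1: "card (edges F \<union> (\<lambda>r. {x,r}) ` verts F) = card (edges F) + card ((\<lambda>r. {x,r}) ` verts F)"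
    by (rule card_Un_disjoint[OF fE finite_imageI[OF fV] dj])
  show ?thesis unfolding apex_edges c1 card_image[OF inj] ..
qed

definition nb2 :: "'a graph \<Rightarrow> bool" where
  "nb2 H \<longleftrightarrow> (\<forall>v\<in>verts H. \<exists>n1 n2. n1 \<noteq> n2 \<and> {v,n1} \<in> edges H \<and> {v,n2} \<in> edges H)"

lemma fE:
  assumes wf: "wf_graph F" shows "finite (edges F)"
proof -
  have fV: "finite (verts F)" using wf by (simp add: wf_graph_def)
  have "edges F \<subseteq> Pow (verts F)" using wf_edge[OF wf] wf unfolding wf_graph_def by fastforce
  then show ?thesis by (rule finite_subset) (simp add: fV)
qed

lemma nbr_img:
  assumes wf: "wf_graph H" "v \<in> verts H"
  shows "card {u. {u,v} \<in> edges H} = card {e\<in>edges H. v \<in> e}"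
proof -
  have inj: "inj_on (\<lambda>u. {u,v}) {u. {u,v} \<in> edges H}" by (auto simp: inj_on_def doubleton_eq_iff)
  have "(\<lambda>u. {u,v}) ` {u. {u,v} \<in> edges H} = {e\<in>edges H. v \<in> e}"
  proof
    show "(\<lambda>u. {u,v}) ` {u. {u,v} \<in> edges H} \<subseteq> {e\<in>edges H. v \<in> e}" by auto
    show "{e\<in>edges H. v \<in> e} \<subseteq> (\<lambda>u. {u,v}) ` {u. {u,v} \<in> edges H}"
    proof
      fix e assume e: "e \<in> {e\<in>edges H. v \<in> e}"
      then obtain a b where ab: "e = {a,b}" using wf unfolding wf_graph_def by blast
      show "e \<in> (\<lambda>u. {u,v}) ` {u. {u,v} \<in> edges H}"
      proof (cases "a = v")
        case True
        then have "e = {b,v}" using ab by auto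
        then show ?thesis using e by blast
      next
        case False
        then have "e = {a,v}" using ab e by auto
        then show ?thesis using e by blast
      qed
    qed
  qed
  then show ?thesis using card_image[OF inj] by simp
qed

lemma handshake:
  assumes wf: "wf_graph H" and tr: "two_regular H"
  shows "card (edges H) = card (verts H)"
proof -
  have fV: "finite (verts H)" using wf by (simp add: wf_graph_def)
  have fEH: "finite (edges H)" using fE[OF wf] .
  have "(\<Sum>v\<in>verts H. card {e\<in>edges H. v \<in> e}) = (\<Sum>v\<in>verts H. 2::nat)"
    using nbr_img[OF wf] tr unfolding two_regular_def degree_def by (intro sum.cong) auto
  also have "\<dots> = 2 * card (verts H)" by simp
  finally have A: "(\<Sum>v\<in>verts H. card {e\<in>edges H. v \<in> e}) = 2 * card (verts H)" .
  have "(\<Sum>v\<in>verts H. card {e\<in>edges H. v \<in> e}) = (\<Sum>v\<in>verts H. \<Sum>e\<in>edges H. if v \<in> e then 1 else 0)"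
    by (intro sum.cong refl) (auto simp: sum.If_cases fEH intro!: arg_cong[where f=card])
  also have "\<dots> = (\<Sum>e\<in>edges H. \<Sum>v\<in>verts H. if v \<in> e then 1 else 0)" by (rule sum.swap)
  also have "\<dots> = (\<Sum>e\<in>edges H. 2::nat)"
  proof (intro sum.cong refl)
    fix e assume e: "e \<in> edges H"
    then obtain a b where ab: "e = {a,b}" "a \<in> verts H" "b \<in> verts H" "a \<noteq> b"
      using wf unfolding wf_graph_def by blast
    have "(\<Sum>v\<in>verts H. if v \<in> e then 1 else (0::nat)) = card (verts H \<inter> e)"
      by (simp add: sum.If_cases fV)
    also have "verts H \<inter> e = {a,b}" using ab by auto
    finally show "(\<Sum>v\<in>verts H. if v \<in> e then 1 else (0::nat)) = 2" using ab by simp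
  qed
  also have "\<dots> = 2 * card (edges H)" by simp
  finally show ?thesis using A by simp
qed

lemma H_props:
  assumes wf: "wf_graph H" and tr: "two_regular H"
  shows "md H" "nb2 H"
proof -
  have N: "\<exists>s t. s \<noteq> t \<and> {u. {u,v} \<in> edges H} = {s,t}" if "v \<in> verts H" for v
    using tr that unfolding two_regular_def degree_def by (simp add: card_2_iff) blast
  show "md H" unfolding md_def
  proof (intro allI impI)
    fix v a b c assume h: "{v, a} \<in> edges H \<and> {v, b} \<in> edges H \<and> {v, c} \<in> edges H"
    then have "v \<in> verts H" using wf_edge[OF wf] by blast
    then obtain s t where st: "{u. {u,v} \<in> edges H} = {s,t}" using N by blast
    have "a \<in> {s,t}" "b \<in> {s,t}" "c \<in> {s,t}" using h unfolding st[symmetric] by (auto simp: insert_commute)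
    then show "a = b \<or> a = c \<or> b = c" by auto
  qed
  show "nb2 H" unfolding nb2_def
  proof
    fix v assume "v \<in> verts H"
    then obtain s t where st: "s \<noteq> t" "{u. {u,v} \<in> edges H} = {s,t}" using N by blast
    then have "{s,v} \<in> edges H" "{t,v} \<in> edges H" by blast+
    then show "\<exists>n1 n2. n1 \<noteq> n2 \<and> {v,n1} \<in> edges H \<and> {v,n2} \<in> edges H"
      using st(1) by (auto simp: insert_commute)
  qed
qed

lemma gunion_verts: "verts (gunion A H) = verts A \<union> verts H"
  by (simp add: gunion_def verts_def)
lemma gunion_edges: "edges (gunion A H) = edges A \<union> edges H"
  by (simp add: gunion_def edges_def)

lemma union_props:
  assumes wA: "wf_graph A" and wH: "wf_graph H" and dj: "verts A \<inter> verts H = {}"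
    and mA: "md A" and mH: "md H" and cA: "\<not> contains_subgraph (complete_bipartite 2 2) A"
    and cH: "\<not> contains_subgraph (complete_bipartite 2 2) H"
    and sA: "\<forall>u\<in>verts A. \<forall>v\<in>verts A. u \<noteq> v \<and> {u,v} \<notin> edges A \<longrightarrow> good A u v"
    and nH: "nb2 H"
  shows "wf_graph (gunion A H)" "md (gunion A H)"
    "\<not> contains_subgraph (complete_bipartite 2 2) (gunion A H)"
    "\<forall>u\<in>verts (gunion A H). \<forall>v\<in>verts (gunion A H). u \<noteq> v \<and> {u,v} \<notin> edges (gunion A H) \<longrightarrow> good (gunion A H) u v"
    "card (edges (gunion A H)) = card (edges A) + card (edges H)"
    "card (verts (gunion A H)) = card (verts A) + card (verts H)"
proof -
  have eA: "p \<in> verts A \<and> q \<in> verts A" if "{p,q} \<in> edges A" for p q using wf_edge[OF wA that] by blast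
  have eH: "p \<in> verts H \<and> q \<in> verts H" if "{p,q} \<in> edges H" for p q using wf_edge[OF wH that] by blast
  have fA: "finite (verts A)" "finite (verts H)" using wA wH by (auto simp: wf_graph_def)
  show "wf_graph (gunion A H)" using wA wH unfolding wf_graph_def gunion_verts gunion_edges
    by (metis UnE UnI1 UnI2 finite_UnI)
  show "md (gunion A H)" unfolding md_def gunion_edges
  proof (intro allI impI)
    fix v a b c assume h: "{v, a} \<in> edges A \<union> edges H \<and> {v, b} \<in> edges A \<union> edges H \<and> {v, c} \<in> edges A \<union> edges H"
    show "a = b \<or> a = c \<or> b = c"
    proof (cases "{v,a} \<in> edges A")
      case True
      then have "v \<in> verts A" using eA by blast
      then have "v \<notin> verts H" using dj by blast
      then have "{v,b} \<in> edges A" "{v,c} \<in> edges A" using h eH by blast+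
      then show ?thesis using True mA[unfolded md_def, rule_format, of v a b c] by simp
    next
      case False
      then have a: "{v,a} \<in> edges H" using h by blast
      then have "v \<in> verts H" using eH by blast
      then have "v \<notin> verts A" using dj by blast
      then have "{v,b} \<in> edges H" "{v,c} \<in> edges H" using h eA by blast+
      then show ?thesis using a mH[unfolded md_def, rule_format, of v a b c] by simp
    qed
  qed
  show "\<not> contains_subgraph (complete_bipartite 2 2) (gunion A H)"
  proof
    assume "contains_subgraph (complete_bipartite 2 2) (gunion A H)"
    then obtain a b c d where h: "distinct [a,b,c,d]" "{a,b,c,d} \<subseteq> verts (gunion A H)"
     "{a,c} \<in> edges A \<union> edges H" "{a,d} \<in> edges A \<union> edges H"
     "{b,c} \<in> edges A \<union> edges H" "{b,d} \<in> edges A \<union> edges H"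
      unfolding K22_iff gunion_edges by blast
    show False
    proof (cases "{a,c} \<in> edges A")
      case True
      then have "a \<in> verts A" "c \<in> verts A" using eA by blast+
      then have "a \<notin> verts H" "c \<notin> verts H" using dj by blast+
      then have 1: "{a,d} \<in> edges A" "{b,c} \<in> edges A" using h eH by blast+
      then have "d \<notin> verts H" using eA dj by blast
      then have 2: "{b,d} \<in> edges A" using h eH by blast
      have "{a,b,c,d} \<subseteq> verts A" using 1 2 eA by blast
      then have "contains_subgraph (complete_bipartite 2 2) A" unfolding K22_iff
        apply - apply (rule exI[of _ a], rule exI[of _ b], rule exI[of _ c], rule exI[of _ d])
        using h(1) True 1 2 by simp
      then show False using cA by simp
    next
      case False
      then have T: "{a,c} \<in> edges H" using h by blast
      then have "a \<in> verts H" "c \<in> verts H" using eH by blast+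
      then have "a \<notin> verts A" "c \<notin> verts A" using dj by blast+
      then have 1: "{a,d} \<in> edges H" "{b,c} \<in> edges H" using h eA by blast+
      then have "d \<notin> verts A" using eH dj by blast
      then have 2: "{b,d} \<in> edges H" using h eA by blast
      have "{a,b,c,d} \<subseteq> verts H" using 1 2 eH by blast
      then have "contains_subgraph (complete_bipartite 2 2) H" unfolding K22_iff
        apply - apply (rule exI[of _ a], rule exI[of _ b], rule exI[of _ c], rule exI[of _ d])
        using h(1) T 1 2 by simp
      then show False using cH by simp
    qed
  qed
  show "\<forall>u\<in>verts (gunion A H). \<forall>v\<in>verts (gunion A H). u \<noteq> v \<and> {u,v} \<notin> edges (gunion A H) \<longrightarrow> good (gunion A H) u v"
  proof (intro ballI impI)
    fix u v assume u: "u \<in> verts (gunion A H)" and v: "v \<in> verts (gunion A H)"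
      and uv: "u \<noteq> v \<and> {u,v} \<notin> edges (gunion A H)"
    show "good (gunion A H) u v"
    proof (cases "u \<in> verts H")
      case True
      then show ?thesis using nH unfolding nb2_def good_def gunion_edges by blast
    next
      case u': False
      show ?thesis
      proof (cases "v \<in> verts H")
        case True
        then show ?thesis using nH unfolding nb2_def good_def gunion_edges by blast
      next
        case False
        then have "u \<in> verts A" "v \<in> verts A" "{u,v} \<notin> edges A" using u v u' uv
          unfolding gunion_verts gunion_edges by blast+
        then have "good A u v" using sA uv by blast
        then show ?thesis unfolding good_def gunion_edges by blast
      qed
    qed
  qed
  have "edges A \<inter> edges H = {}"
  proof (rule ccontr)
    assume "edges A \<inter> edges H \<noteq> {}"
    then obtain e where e: "e \<in> edges A" "e \<in> edges H" by blast
    then obtain p q where "e = {p,q}" using wA unfolding wf_graph_def by blast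
    then show False using e eA eH dj by blast
  qed
  then show "card (edges (gunion A H)) = card (edges A) + card (edges H)"
    unfolding gunion_edges by (rule card_Un_disjoint[OF fE[OF wA] fE[OF wH]])
  show "card (verts (gunion A H)) = card (verts A) + card (verts H)"
    unfolding gunion_verts by (rule card_Un_disjoint[OF fA dj])
qed

lemma K1_props:
  shows "wf_graph (complete_graph {y})" "md (complete_graph {y})"
    "\<not> contains_subgraph (complete_bipartite 2 2) (complete_graph {y})"
    "\<forall>u\<in>verts (complete_graph {y}). \<forall>v\<in>verts (complete_graph {y}). u \<noteq> v \<and> {u,v} \<notin> edges (complete_graph {y}) \<longrightarrow> good (complete_graph {y}) u v"
    "card (edges (complete_graph {y})) = 0" "verts (complete_graph {y}) = {y}"
proof -
  have E: "edges (complete_graph {y}) = {}" by (simp add: complete_graph_def edges_def)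
  have V: "verts (complete_graph {y}) = {y}" by (simp add: complete_graph_def verts_def)
  show "wf_graph (complete_graph {y})" unfolding wf_graph_def E V by simp
  show "md (complete_graph {y})" unfolding md_def E by simp
  show "\<not> contains_subgraph (complete_bipartite 2 2) (complete_graph {y})" unfolding K22_iff E by simp
  show "\<forall>u\<in>verts (complete_graph {y}). \<forall>v\<in>verts (complete_graph {y}). u \<noteq> v \<and> {u,v} \<notin> edges (complete_graph {y}) \<longrightarrow> good (complete_graph {y}) u v"
    unfolding V by simp
  show "card (edges (complete_graph {y})) = 0" unfolding E by simp
  show "verts (complete_graph {y}) = {y}" by (rule V)
qed

lemma K2_props:
  assumes yz: "y \<noteq> z"
  shows "wf_graph (complete_graph {y,z})" "md (complete_graph {y,z})"
    "\<not> contains_subgraph (complete_bipartite 2 2) (complete_graph {y,z})"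
    "\<forall>u\<in>verts (complete_graph {y,z}). \<forall>v\<in>verts (complete_graph {y,z}). u \<noteq> v \<and> {u,v} \<notin> edges (complete_graph {y,z}) \<longrightarrow> good (complete_graph {y,z}) u v"
    "card (edges (complete_graph {y,z})) = 1" "verts (complete_graph {y,z}) = {y,z}"
proof -
  have E0: "{{u,v}|u v. u \<in> {y,z} \<and> v \<in> {y,z} \<and> u \<noteq> v} = {{y,z}}"
  proof
    show "{{u,v}|u v. u \<in> {y,z} \<and> v \<in> {y,z} \<and> u \<noteq> v} \<subseteq> {{y,z}}" by (auto simp: insert_commute)
    show "{{y,z}} \<subseteq> {{u,v}|u v. u \<in> {y,z} \<and> v \<in> {y,z} \<and> u \<noteq> v}" using yz by blast
  qed
  have E: "edges (complete_graph {y,z}) = {{y,z}}" unfolding complete_graph_def edges_def using E0 by simp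
  have V: "verts (complete_graph {y,z}) = {y,z}" by (simp add: complete_graph_def verts_def)
  show "wf_graph (complete_graph {y,z})" unfolding wf_graph_def E V
    apply simp apply (rule exI[of _ y], rule exI[of _ z]) using yz by simp
  show "md (complete_graph {y,z})" unfolding md_def E by (auto simp: doubleton_eq_iff)
  show "\<not> contains_subgraph (complete_bipartite 2 2) (complete_graph {y,z})" unfolding K22_iff V
    by auto
  show "\<forall>u\<in>verts (complete_graph {y,z}). \<forall>v\<in>verts (complete_graph {y,z}). u \<noteq> v \<and> {u,v} \<notin> edges (complete_graph {y,z}) \<longrightarrow> good (complete_graph {y,z}) u v"
    unfolding V E by (auto simp: insert_commute)
  show "card (edges (complete_graph {y,z})) = 1" unfolding E by simp
  show "verts (complete_graph {y,z}) = {y,z}" by (rule V)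
qed

lemma path4:
  "path_graph [a,b,c,d] = ({a,b,c,d}, {{a,b},{b,c},{c,d}})"
proof -
  have "{{[a,b,c,d] ! i, [a,b,c,d] ! Suc i} | i. Suc i < length [a,b,c,d]}
        = (\<lambda>i. {[a,b,c,d] ! i, [a,b,c,d] ! Suc i}) ` {i. Suc i < 4}" by auto
  also have "{i. Suc i < 4} = {0,1,2::nat}" by auto
  finally show ?thesis unfolding path_graph_def by simp
qed

lemma P4_props:
  assumes ds: "distinct [a,b,c,d]"
  defines "P \<equiv> path_graph [a,b,c,d]"
  shows "wf_graph P" "md P"
    "\<not> contains_subgraph (complete_bipartite 2 2) P"
    "\<forall>u\<in>verts P. \<forall>v\<in>verts P. u \<noteq> v \<and> {u,v} \<notin> edges P \<longrightarrow> good P u v"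
    "card (edges P) = 3" "verts P = {a,b,c,d}"
proof -
  have E: "edges P = {{a,b},{b,c},{c,d}}" by (simp add: P_def path4 edges_def)
  have V: "verts P = {a,b,c,d}" by (simp add: P_def path4 verts_def)
  have nb: "{v,w} \<in> edges P \<longleftrightarrow> (v = a \<and> w = b) \<or> (v = b \<and> w = a) \<or> (v = b \<and> w = c) \<or>
     (v = c \<and> w = b) \<or> (v = c \<and> w = d) \<or> (v = d \<and> w = c)" for v w
    unfolding E by (auto simp: doubleton_eq_iff)
  show "wf_graph P" unfolding wf_graph_def E V using ds by auto
  show "md P" unfolding md_def nb using ds by auto
  show "\<not> contains_subgraph (complete_bipartite 2 2) P"
  proof
    assume "contains_subgraph (complete_bipartite 2 2) P"
    then obtain p q r s where h: "distinct [p,q,r,s]" "{p,q,r,s} \<subseteq> verts P"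
      "{p,r} \<in> edges P" "{p,s} \<in> edges P" "{q,r} \<in> edges P" "{q,s} \<in> edges P"
      unfolding K22_iff by blast
    have two: "w = b \<or> w = c" if "w \<in> verts P" "{w,n1} \<in> edges P" "{w,n2} \<in> edges P" "n1 \<noteq> n2" for w n1 n2
      using that unfolding V nb using ds by auto
    have "p = b \<or> p = c" using two[of p r s] h by (simp add: insert_commute)
    moreover have "q = b \<or> q = c" using two[of q r s] h by simp
    moreover have "r = b \<or> r = c" using two[of r p q] h by (simp add: insert_commute)
    ultimately show False using h(1) by auto
  qed
  show "\<forall>u\<in>verts P. \<forall>v\<in>verts P. u \<noteq> v \<and> {u,v} \<notin> edges P \<longrightarrow> good P u v"
  proof (intro ballI impI)
    fix u v assume u: "u \<in> verts P" and v: "v \<in> verts P" and uv: "u \<noteq> v \<and> {u,v} \<notin> edges P"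
    have gb: "good P u v" if gbh: "u = b \<or> u = c \<or> v = b \<or> v = c"
    proof -
      consider "u = b" | "u = c" | "v = b" | "v = c" using gbh by blast
      then show ?thesis
      proof cases
        case 1 then show ?thesis unfolding good_def
          by (intro disjI1 exI[of _ a] exI[of _ c]) (use ds in \<open>auto simp add: E doubleton_eq_iff\<close>)
      next
        case 2 then show ?thesis unfolding good_def
          by (intro disjI1 exI[of _ b] exI[of _ d]) (use ds in \<open>auto simp add: E doubleton_eq_iff\<close>)
      next
        case 3 then show ?thesis unfolding good_def
          by (intro disjI2 disjI1 exI[of _ a] exI[of _ c]) (use ds in \<open>auto simp add: E doubleton_eq_iff\<close>)
      next
        case 4 then show ?thesis unfolding good_def
          by (intro disjI2 disjI1 exI[of _ b] exI[of _ d]) (use ds in \<open>auto simp add: E doubleton_eq_iff\<close>)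
      qed
    qed
    have gad: "good P a d" unfolding good_def
      apply (rule disjI2, rule disjI2, rule exI[of _ b], rule exI[of _ c]) by (use ds in \<open>auto simp add: E doubleton_eq_iff\<close>)
    have gda: "good P d a" unfolding good_def
      apply (rule disjI2, rule disjI2, rule exI[of _ c], rule exI[of _ b]) by (use ds in \<open>auto simp add: E doubleton_eq_iff\<close>)
    show "good P u v"
    proof (cases "u = b \<or> u = c \<or> v = b \<or> v = c")
      case True then show ?thesis by (rule gb)
    next
      case False
      then have "(u = a \<and> v = d) \<or> (u = d \<and> v = a)" using u v uv unfolding V by auto
      then show ?thesis using gad gda by auto
    qed
  qed
  show "card (edges P) = 3" unfolding E using ds by (simp add: doubleton_eq_iff)
  show "verts P = {a,b,c,d}" by (rule V)
qed

lemma gen: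
  fixes A H :: "'a graph"
  assumes inH: "in_H m H" and wA: "wf_graph A" and mA: "md A"
    and cA: "\<not> contains_subgraph (complete_bipartite 2 2) A"
    and sA: "\<forall>u\<in>verts A. \<forall>v\<in>verts A. u \<noteq> v \<and> {u,v} \<notin> edges A \<longrightarrow> good A u v"
    and dj: "verts A \<inter> verts H = {}" and xA: "x \<notin> verts A" and xH: "x \<notin> verts H"
  shows "K23_saturated (gjoin (complete_graph {x}) (gunion A H)) \<and>
    card (edges (gjoin (complete_graph {x}) (gunion A H))) = card (edges A) + card (verts A) + 2 * m"
proof -
  have wH: "wf_graph H" and cV: "card (verts H) = m" and tr: "two_regular H"
    and cH: "\<not> contains_subgraph (complete_bipartite 2 2) H"
    using inH unfolding in_H_def by auto
  note Hp = H_props[OF wH tr]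
  note U = union_props[OF wA wH dj mA Hp(1) cA cH sA Hp(2)]
  have xF: "x \<notin> verts (gunion A H)" using xA xH by (simp add: gunion_verts)
  have "K23_saturated (gjoin (complete_graph {x}) (gunion A H))"
    by (rule apex_main[OF U(1) xF U(2) U(3) U(4)])
  moreover have "card (edges (gjoin (complete_graph {x}) (gunion A H))) = card (edges A) + card (verts A) + 2 * m"
    unfolding apex_card[OF U(1) xF] U(5) U(6) handshake[OF wH tr] cV by simp
  ultimately show ?thesis by blast
qed

theorem mainTheorem2:
  fixes G :: "'a graph" and n :: nat
  assumes "in_G n G"
  shows "K23_saturated G \<and> card (edges G) = 2 * n - 3"
  using assms unfolding in_G_def
proof (elim disjE exE conjE)
  fix H m x y
  assume h: "in_H m H" "m + 2 = n" "x \<notin> verts H" "y \<notin> verts H" "x \<noteq> y"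
    "G = gjoin (complete_graph {x}) (gunion (complete_graph {y}) H)"
  note K = K1_props[of y]
  have dj: "verts (complete_graph {y}) \<inter> verts H = {}" unfolding K(6) using h(4) by simp
  have xA: "x \<notin> verts (complete_graph {y})" unfolding K(6) using h(5) by simp
  have g: "K23_saturated G \<and> card (edges G) = card (edges (complete_graph {y})) + card (verts (complete_graph {y})) + 2 * m"
    unfolding h(6) by (rule gen[OF h(1) K(1) K(2) K(3) K(4) dj xA h(3)])
  have "card (edges G) = 2 * n - 3" using g h(2) unfolding K(5) K(6) by simp
  then show ?thesis using g by blast
next
  fix H m x y z
  assume h: "in_H m H" "m + 3 = n" "distinct [x, y, z]" "set [x, y, z] \<inter> verts H = {}"
    "G = gjoin (complete_graph {x}) (gunion (complete_graph {y, z}) H)"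
  have yz: "y \<noteq> z" using h(3) by simp
  note K = K2_props[OF yz]
  have dj: "verts (complete_graph {y,z}) \<inter> verts H = {}" unfolding K(6) using h(4) by simp
  have xA: "x \<notin> verts (complete_graph {y,z})" unfolding K(6) using h(3) by simp
  have xH: "x \<notin> verts H" using h(4) by auto
  have g: "K23_saturated G \<and> card (edges G) = card (edges (complete_graph {y,z})) + card (verts (complete_graph {y,z})) + 2 * m"
    unfolding h(5) by (rule gen[OF h(1) K(1) K(2) K(3) K(4) dj xA xH])
  have "card (edges G) = 2 * n - 3" using g h(2) yz unfolding K(5) K(6) by simp
  then show ?thesis using g by blast
next
  fix H m x ps
  assume h: "in_H m H" "m + 5 = n" "length ps = 4" "distinct (x # ps)" "set (x # ps) \<inter> verts H = {}"
    "G = gjoin (complete_graph {x}) (gunion (path_graph ps) H)"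
  have "\<exists>a b c d. ps = [a,b,c,d]" using h(3) by (simp add: length_Suc_conv numeral_eq_Suc) blast
  then obtain a b c d where ps: "ps = [a,b,c,d]" by blast
  have ds: "distinct [a,b,c,d]" using h(4) ps by simp
  note K = P4_props[OF ds]
  have dj: "verts (path_graph [a,b,c,d]) \<inter> verts H = {}" unfolding K(6) using h(5) ps by simp
  have xA: "x \<notin> verts (path_graph [a,b,c,d])" unfolding K(6) using h(4) ps by simp
  have xH: "x \<notin> verts H" using h(5) by auto
  have g: "K23_saturated G \<and> card (edges G) = card (edges (path_graph [a,b,c,d])) + card (verts (path_graph [a,b,c,d])) + 2 * m"
    unfolding h(6) ps by (rule gen[OF h(1) K(1) K(2) K(3) K(4) dj xA xH])
  have c4: "card {a,b,c,d} = 4" using ds by simp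
  have "card (edges G) = 2 * n - 3" using g h(2) c4 unfolding K(5) K(6) by simp
  then show ?thesis using g by blast
qed

end
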